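(* Let $N,\nu,M$ be positive integers and $A$ an $N\times N$ complex matrix with $A_{ij}=|A_{ij}|e^{i\varphi(i,j)}$ ($\varphi$ real). Let $S_1,\dots,S_\nu\subseteq[1,N]\times[1,N]$ be pairwise disjoint with union $[1,N]\times[1,N]$, and for $(i,j)$ let $k(i,j)$ be the $k$ with $(i,j)\in S_k$. Suppose there are positive integers $d_k,d'_k$ with $\#\{i:(i,j)\in S_k\}=d_k$ for all $j$ and $\#\{j:(i,j)\in S_k\}=d'_k$ for all $i$, and reals $g_k\ge0$ with $|A_{ij}|\le g_k$ for all $(i,j)\in S_k$, such that $\alpha_{\mathrm{zig}}:=\sum_{k=1}^\nu\sqrt{d_kd'_k}\,g_k>0$. Let $U$ be the circuit described in the context. Then for every $|\Psi\rangle=\sum_j\psi_j|j\rangle$, $$(\langle0|_{\mathrm{anc}}\otimes I_{R_2})\,U\,(|0\rangle_{\mathrm{anc}}\otimes|\Psi\rangle)=\frac{\tilde A}{\alpha_{\mathrm{zig}}}|\Psi\rangle,\quad\tilde A_{ij}=e^{i\varphi(i,j)}\frac{g_{k(i,j)}c_{ij}}{M},$$ with $c_{ij}=\#\{m\in\{1,\dots,M\}:m\,g_{k(i,j)}\le M|A_{ij}|\}$. Consequently $|\tilde A_{ij}-A_{ij}|\le g_{k(i,j)}/M$, and $U$ block-encodes $A$ with rescaling factor $\alpha_{\mathrm{zig}}$ (up to this rounding).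
   Context: States: $|\chi_j\rangle=\alpha_{\mathrm{zig}}^{-1/2}\sum_{k=1}^\nu\sum_{i:(i,j)\in S_k}(d'_k/d_k)^{1/4}\sqrt{g_k}\,|k\rangle|i\rangle$ and $|\phi_i\rangle=\alpha_{\mathrm{zig}}^{-1/2}\sum_{k=1}^\nu\sum_{j:(i,j)\in S_k}(d_k/d'_k)^{1/4}\sqrt{g_k}\,|k\rangle|j\rangle$ (both normalized). Registers: flag qubit $F$; sampling register $\mathrm{Sm}$ with orthonormal states $|0\rangle,\dots,|M\rangle$; value registers $V_A,V_G$ (exact reals, initial $|0\rangle$); label register $K$ with states $|0\rangle,|1\rangle,\dots,|\nu\rangle$; index registers $R_1,R_2$ with states $|0\rangle,|1\rangle,\dots,|N\rangle$; $|0\rangle_{\mathrm{anc}}$ is the all-$|0\rangle$ state of $F,\mathrm{Sm},V_A,V_G,K,R_1$. Unitaries: $\mathrm{PREP}_\chi|0\rangle_K|0\rangle_{R_1}|j\rangle_{R_2}=|\chi_j\rangle|j\rangle$; $\mathrm{PREP}_\phi|0\rangle_K|0\rangle_{R_1}|i\rangle_{R_2}=|\phi_i\rangle|i\rangle$; $\mathrm{USP}_M|0\rangle=\frac1{\sqrt M}\sum_{m=1}^M|m\rangle$; $U_A:|i\rangle_{R_1}|j\rangle_{R_2}|0\rangle_{V_A}\mapsto|i\rangle|j\rangle|\,|A_{ij}|\,\rangle$; $U_G:|k\rangle_K|0\rangle_{V_G}\mapsto|k\rangle|g_k\rangle$; $\mathrm{Comp}$ on $(\mathrm{Sm},V_A,V_G,F)$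 keeps $F=|0\rangle$ for $|m\rangle|a\rangle|b\rangle$ with $Ma\ge bm$ and sets $F=|1\rangle$ otherwise; $\mathrm{PHASE}_\varphi:|i\rangle|j\rangle\mapsto e^{i\varphi(i,j)}|i\rangle|j\rangle$ on $(R_1,R_2)$; $\mathrm{SWAP}$ exchanges $R_1,R_2$. Circuit $U$ in order: $\mathrm{PREP}_\chi$ and $\mathrm{USP}_M$; $U_G$, $U_A$; $\mathrm{Comp}$, $\mathrm{PHASE}_\varphi$; $U_A^\dagger$, $U_G^\dagger$; $\mathrm{SWAP}$; $\mathrm{USP}_M^\dagger$ and $\mathrm{PREP}_\phi^\dagger$. *)

theory Defs
  imports Complex_Main
begin

text \<open>Computational basis configurations of all registers:
  flag F, sampling register Sm, value registers V_A, V_G (exact reals),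
  label register K, index registers R_1, R_2.\<close>
record cfg =
  regF  :: bool
  regSm :: nat
  regVA :: real
  regVG :: real
  regK  :: nat
  regR1 :: nat
  regR2 :: nat

text \<open>State vectors are finitely supported amplitude functions on basis configurations.\<close>
type_synonym qstate = "cfg \<Rightarrow> complex"

definition ket :: "cfg \<Rightarrow> qstate" where
  "ket c = (\<lambda>x. if x = c then 1 else 0)"

definition fsupp :: "qstate \<Rightarrow> bool" where
  "fsupp v \<longleftrightarrow> finite {x. v x \<noteq> 0}"

definition braket :: "qstate \<Rightarrow> qstate \<Rightarrow> complex" where
  "braket v w = (\<Sum>x\<in>{x. v x \<noteq> 0}. cnj (v x) * w x)"

definition unitary_pair :: "(qstate \<Rightarrow> qstate) \<Rightarrow> (qstate \<Rightarrow> qstate) \<Rightarrow> bool" where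
  "unitary_pair U Ud \<longleftrightarrow>
     (\<forall>v. fsupp v \<longrightarrow> fsupp (U v) \<and> fsupp (Ud v) \<and> Ud (U v) = v \<and> U (Ud v) = v) \<and>
     (\<forall>v w. fsupp v \<longrightarrow> fsupp w \<longrightarrow> braket (U v) (U w) = braket v w) \<and>
     (\<forall>a v w. fsupp v \<longrightarrow> fsupp w \<longrightarrow>
        U (\<lambda>x. a * v x + w x) = (\<lambda>x. a * U v x + U w x))"

definition unitary_op :: "(qstate \<Rightarrow> qstate) \<Rightarrow> bool" where
  "unitary_op U \<longleftrightarrow> (\<exists>Ud. unitary_pair U Ud)"

text \<open>U acts only on the registers (K,R_1), controlled by R_2: on every basis input it
  leaves all registers other than K and R_1 unchanged.\<close>
definition acts_on_K_R1 :: "(qstate \<Rightarrow> qstate) \<Rightarrow> bool" where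
  "acts_on_K_R1 U \<longleftrightarrow>
     (\<forall>c x. U (ket c) x \<noteq> 0 \<longrightarrow> x = c\<lparr>regK := regK x, regR1 := regR1 x\<rparr>)"

definition PHASE :: "(nat \<Rightarrow> nat \<Rightarrow> real) \<Rightarrow> qstate \<Rightarrow> qstate" where
  "PHASE \<phi> v = (\<lambda>c. exp (\<i> * complex_of_real (\<phi> (regR1 c) (regR2 c))) * v c)"

definition SWAP :: "qstate \<Rightarrow> qstate" where
  "SWAP v = (\<lambda>c. v (c\<lparr>regR1 := regR2 c, regR2 := regR1 c\<rparr>))"

definition anc0 :: "nat \<Rightarrow> cfg" where
  "anc0 j = \<lparr>regF = False, regSm = 0, regVA = 0, regVG = 0, regK = 0, regR1 = 0, regR2 = j\<rparr>"

definition input_state :: "(nat \<Rightarrow> complex) \<Rightarrow> qstate" where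
  "input_state \<psi> = (\<lambda>c. if (\<exists>j. c = anc0 j) then \<psi> (regR2 c) else 0)"

definition kidx :: "(nat \<Rightarrow> (nat \<times> nat) set) \<Rightarrow> nat \<Rightarrow> nat \<Rightarrow> nat \<Rightarrow> nat" where
  "kidx S \<nu> i j = (THE k. k \<in> {1..\<nu>} \<and> (i, j) \<in> S k)"

definition cnt :: "nat \<Rightarrow> real \<Rightarrow> real \<Rightarrow> nat" where
  "cnt M gk a = card {m \<in> {1..M}. real m * gk \<le> real M * a}"

definition Atilde ::
  "nat \<Rightarrow> (nat \<Rightarrow> (nat \<times> nat) set) \<Rightarrow> (nat \<Rightarrow> real) \<Rightarrow> (nat \<Rightarrow> nat \<Rightarrow> complex)
     \<Rightarrow> (nat \<Rightarrow> nat \<Rightarrow> real) \<Rightarrow> nat \<Rightarrow> nat \<Rightarrow> nat \<Rightarrow> complex" where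
  "Atilde \<nu> S g A \<phi> M i j =
     exp (\<i> * complex_of_real (\<phi> i j)) *
     complex_of_real (g (kidx S \<nu> i j) * real (cnt M (g (kidx S \<nu> i j)) (cmod (A i j))) / real M)"

end

theory Submission
  imports Defs
begin


definition comb :: "'i set \<Rightarrow> ('i \<Rightarrow> complex) \<Rightarrow> ('i \<Rightarrow> cfg) \<Rightarrow> qstate" where
  "comb I f c = (\<lambda>x. \<Sum>t\<in>I. f t * ket (c t) x)"

lemma fsupp_ket: "fsupp (ket c)"
proof -
  have "{x. ket c x \<noteq> 0} = {c}" by (auto simp: ket_def)
  then show ?thesis by (simp add: fsupp_def)
qed

lemma comb_out: "(\<forall>t\<in>I. c t \<noteq> z) \<Longrightarrow> comb I f c z = 0"
  by (auto simp: comb_def ket_def intro!: sum.neutral)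

lemma fsupp_comb: "finite I \<Longrightarrow> fsupp (comb I f c)"
proof -
  assume "finite I"
  have "{x. comb I f c x \<noteq> 0} \<subseteq> c ` I"
  proof
    fix x assume "x \<in> {x. comb I f c x \<noteq> 0}"
    then show "x \<in> c ` I" using comb_out[of I c x f] by auto
  qed
  then show ?thesis using \<open>finite I\<close> unfolding fsupp_def by (meson finite_imageI finite_subset)
qed

lemma comb_insert: "t \<notin> I \<Longrightarrow> finite I \<Longrightarrow>
   comb (insert t I) f c = (\<lambda>x. f t * ket (c t) x + comb I f c x)"
  by (simp add: comb_def)

lemma up_lin: assumes "unitary_pair U Ud" "fsupp v" "fsupp w"
  shows "U (\<lambda>x. a * v x + w x) = (\<lambda>x. a * U v x + U w x)"
proof -
  have "\<forall>a v w. fsupp v \<longrightarrow> fsupp w \<longrightarrow>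
        U (\<lambda>x. a * v x + w x) = (\<lambda>x. a * U v x + U w x)"
    using assms(1) unfolding unitary_pair_def by (elim conjE)
  then show ?thesis using assms(2,3) by simp
qed

lemma up_fs: assumes "unitary_pair U Ud" "fsupp v"
  shows "fsupp (U v)" "fsupp (Ud v)" "Ud (U v) = v" "U (Ud v) = v"
proof -
  have "\<forall>v. fsupp v \<longrightarrow> fsupp (U v) \<and> fsupp (Ud v) \<and> Ud (U v) = v \<and> U (Ud v) = v"
    using assms(1) unfolding unitary_pair_def by (elim conjE)
  then show "fsupp (U v)" "fsupp (Ud v)" "Ud (U v) = v" "U (Ud v) = v" using assms(2) by simp_all
qed

lemma up_br: assumes "unitary_pair U Ud" "fsupp v" "fsupp w"
  shows "braket (U v) (U w) = braket v w"
proof -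
  have "\<forall>v w. fsupp v \<longrightarrow> fsupp w \<longrightarrow> braket (U v) (U w) = braket v w"
    using assms(1) unfolding unitary_pair_def by (elim conjE)
  then show ?thesis using assms(2,3) by simp
qed

lemma up_zero: assumes "unitary_pair U Ud" shows "U (\<lambda>x. 0) = (\<lambda>x. 0)"
proof -
  have f0: "fsupp (\<lambda>x. 0::complex)" by (simp add: fsupp_def)
  have "U (\<lambda>x. 1 * 0 + 0) = (\<lambda>x. 1 * U (\<lambda>x. 0) x + U (\<lambda>x. 0) x)"
    by (rule up_lin[OF assms f0 f0])
  then have "\<And>x. U (\<lambda>x. 0) x = U (\<lambda>x. 0) x + U (\<lambda>x. 0) x"
    by (metis add_0 mult_1)
  then show ?thesis by auto
qed

lemma up_comb: assumes "unitary_pair U Ud" and "finite I"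
  shows "U (comb I f c) = (\<lambda>x. \<Sum>t\<in>I. f t * U (ket (c t)) x)"
  using assms(2)
proof (induction I rule: finite_induct)
  case empty
  then show ?case using up_zero[OF assms(1)] by (simp add: comb_def)
next
  case (insert t I)
  have "U (comb (insert t I) f c) = U (\<lambda>x. f t * ket (c t) x + comb I f c x)"
    using insert by (simp add: comb_insert)
  also have "\<dots> = (\<lambda>x. f t * U (ket (c t)) x + U (comb I f c) x)"
    by (rule up_lin[OF assms(1) fsupp_ket fsupp_comb[OF insert(1)]])
  finally show ?case using insert by simp
qed

lemma up_comb_ket: assumes "unitary_pair U Ud" and "finite I"
  and "\<forall>t\<in>I. U (ket (c t)) = ket (e t)"
  shows "U (comb I f c) = comb I f e"
  using up_comb[OF assms(1,2)] assms(3) by (simp add: comb_def)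

lemma up_comb_comb: assumes "unitary_pair U Ud" and "finite I" and "\<forall>t\<in>I. finite (J t)"
  and "\<forall>t\<in>I. U (ket (c t)) = comb (J t) (h t) (e t)"
  shows "U (comb I f c) = comb (Sigma I J) (\<lambda>(t,s). f t * h t s) (\<lambda>(t,s). e t s)"
proof -
  have "U (comb I f c) = (\<lambda>x. \<Sum>t\<in>I. f t * comb (J t) (h t) (e t) x)"
    using up_comb[OF assms(1,2)] assms(4) by simp
  also have "\<dots> = comb (Sigma I J) (\<lambda>(t,s). f t * h t s) (\<lambda>(t,s). e t s)"
    unfolding comb_def
    by (rule ext) (simp add: sum_distrib_left mult.assoc sum.Sigma[OF assms(2,3)] case_prod_beta')
  finally show ?thesis .
qed

lemma comb_cong: "I = I' \<Longrightarrow> (\<forall>t\<in>I. f t = f' t) \<Longrightarrow> (\<forall>t\<in>I. c t = c' t) \<Longrightarrow> comb I f c = comb I' f' c'"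
  unfolding comb_def by (intro ext sum.cong) auto

lemma phase_comb: "PHASE \<phi> (comb I f c) =
   comb I (\<lambda>t. exp (\<i> * complex_of_real (\<phi> (regR1 (c t)) (regR2 (c t)))) * f t) c"
  unfolding PHASE_def comb_def
  by (rule ext, simp add: sum_distrib_left, rule sum.cong, auto simp: ket_def)

definition swapc :: "cfg \<Rightarrow> cfg" where
  "swapc c = c\<lparr>regR1 := regR2 c, regR2 := regR1 c\<rparr>"

lemma swapc_eq: "(swapc x = y) = (x = swapc y)"
  by (cases x, cases y) (auto simp: swapc_def)

lemma swapc_eq2: "(x\<lparr>regR1 := regR2 x, regR2 := regR1 x\<rparr> = y) = (x = swapc y)"
  by (cases x, cases y) (auto simp: swapc_def)

lemma swap_comb: "SWAP (comb I f c) = comb I f (\<lambda>t. swapc (c t))"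
  unfolding SWAP_def comb_def ket_def
  by (rule ext, rule sum.cong, auto simp: swapc_eq2)

lemma supp_comb: "{x. comb I f c x \<noteq> 0} \<subseteq> c ` I"
proof
  fix x assume "x \<in> {x. comb I f c x \<noteq> 0}"
  then show "x \<in> c ` I" using comb_out[of I c x f] by auto
qed

lemma comb_at: assumes "finite I" "inj_on c I" "t \<in> I" shows "comb I f c (c t) = f t"
proof -
  have "comb I f c (c t) = (\<Sum>t'\<in>I. if t' = t then f t' else 0)"
    unfolding comb_def ket_def
  proof (rule sum.cong)
    fix t' assume "t' \<in> I"
    then have "(c t = c t') = (t' = t)" using inj_on_eq_iff[OF assms(2)] assms(3) by metis
    then show "f t' * (if c t = c t' then 1 else 0) = (if t' = t then f t' else 0)" by simp
  qed simp
  then show ?thesis using assms by simp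
qed

lemma braket_comb: assumes "finite I" "inj_on c I"
  shows "braket (comb I f c) w = (\<Sum>t\<in>I. cnj (f t) * w (c t))"
proof -
  have "braket (comb I f c) w = (\<Sum>x\<in>c ` I. cnj (comb I f c x) * w x)"
    unfolding braket_def
    by (rule sum.mono_neutral_left[OF finite_imageI[OF assms(1)] supp_comb]) simp
  also have "\<dots> = (\<Sum>t\<in>I. cnj (comb I f c (c t)) * w (c t))"
    by (simp add: sum.reindex assms(2))
  also have "\<dots> = (\<Sum>t\<in>I. cnj (f t) * w (c t))"
    by (rule sum.cong, simp_all add: comb_at assms)
  finally show ?thesis .
qed

lemma braket_ket: "braket (ket c) v = v c"
proof -
  have "{x. ket c x \<noteq> 0} = {c}" by (auto simp: ket_def)
  then show ?thesis by (simp add: braket_def ket_def)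
qed

lemma adj_eval: assumes "unitary_pair U Ud" "fsupp w" shows "Ud w c = braket (U (ket c)) w"
proof -
  have "Ud w c = braket (ket c) (Ud w)" by (simp add: braket_ket)
  also have "\<dots> = braket (U (ket c)) (U (Ud w))"
    using up_br[OF assms(1) fsupp_ket up_fs(2)[OF assms]] by simp
  also have "U (Ud w) = w" using up_fs(4)[OF assms] .
  finally show ?thesis .
qed

lemma sum2_comb: "finite K \<Longrightarrow> \<forall>k\<in>K. finite (J k) \<Longrightarrow>
  (\<lambda>x. \<Sum>k\<in>K. \<Sum>i\<in>J k. h k * ket (e k i) x) = comb (Sigma K J) (\<lambda>(k,i). h k) (\<lambda>(k,i). e k i)"
  unfolding comb_def by (rule ext, simp add: sum.Sigma split_beta)

lemma sum1_comb: "(\<lambda>x. \<Sum>m\<in>K. ket (e m) x / s) = comb K (\<lambda>m. 1 / s) e"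
  unfolding comb_def by (rule ext, rule sum.cong, auto)

lemma sum_if_card: "finite A \<Longrightarrow> (\<Sum>m\<in>A. if P m then c else 0) = of_nat (card {m\<in>A. P m}) * (c::complex)"
  by (simp add: sum.If_cases Int_def)

definition cf :: "bool \<Rightarrow> nat \<Rightarrow> real \<Rightarrow> real \<Rightarrow> nat \<Rightarrow> nat \<Rightarrow> nat \<Rightarrow> cfg" where
  "cf F s va vg k r1 r2 = \<lparr>regF = F, regSm = s, regVA = va, regVG = vg, regK = k, regR1 = r1, regR2 = r2\<rparr>"

lemma cf_sel[simp]: "regF (cf F s va vg k r1 r2) = F" "regSm (cf F s va vg k r1 r2) = s"
  "regVA (cf F s va vg k r1 r2) = va" "regVG (cf F s va vg k r1 r2) = vg"
  "regK (cf F s va vg k r1 r2) = k" "regR1 (cf F s va vg k r1 r2) = r1" "regR2 (cf F s va vg k r1 r2) = r2"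
  by (simp_all add: cf_def)

lemma cf_upd[simp]: "(cf F s va vg k r1 r2)\<lparr>regF := F'\<rparr> = cf F' s va vg k r1 r2"
  "(cf F s va vg k r1 r2)\<lparr>regSm := s'\<rparr> = cf F s' va vg k r1 r2"
  "(cf F s va vg k r1 r2)\<lparr>regVA := va'\<rparr> = cf F s va' vg k r1 r2"
  "(cf F s va vg k r1 r2)\<lparr>regVG := vg'\<rparr> = cf F s va vg' k r1 r2"
  "(cf F s va vg k r1 r2)\<lparr>regK := k', regR1 := r1'\<rparr> = cf F s va vg k' r1' r2"
  by (simp_all add: cf_def)

lemma cf_eq[simp]: "(cf F s va vg k r1 r2 = cf F' s' va' vg' k' r1' r2') \<longleftrightarrow>
   F = F' \<and> s = s' \<and> va = va' \<and> vg = vg' \<and> k = k' \<and> r1 = r1' \<and> r2 = r2'"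
  by (simp add: cf_def)

lemma anc0_cf: "anc0 j = cf False 0 0 0 0 0 j"
  by (simp add: anc0_def cf_def)

lemma swapc_cf[simp]: "swapc (cf F s va vg k r1 r2) = cf F s va vg k r2 r1"
  by (simp add: swapc_def cf_def)

lemma cnt_bound: assumes "M > 0" "0 \<le> a" "a \<le> g"
  shows "\<bar>g * real (cnt M g a) / real M - a\<bar> \<le> g / real M"
proof (cases "g = 0")
  case True
  then have "a = 0" using assms by simp
  then show ?thesis using True by (simp add: cnt_def)
next
  case False
  then have gp: "g > 0" using assms by simp
  have Mp: "real M > 0" using assms by simp
  define x where "x = real M * a / g"
  have x0: "0 \<le> x" using assms gp by (simp add: x_def)
  have "real M * a \<le> real M * g" using assms by (intro mult_left_mono) auto
  then have xM: "x \<le> real M" using gp by (simp add: x_def pos_divide_le_eq)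
  define n where "n = nat \<lfloor>x\<rfloor>"
  have nx: "real n \<le> x" "x < real n + 1" using x0 by (simp_all add: n_def)
  have key: "\<And>m::nat. (real m * g \<le> real M * a) = (m \<le> n)"
  proof -
    fix m :: nat
    have "(real m * g \<le> real M * a) = (real m \<le> x)" using gp by (simp add: x_def pos_le_divide_eq)
    also have "\<dots> = (int m \<le> \<lfloor>x\<rfloor>)" by (simp add: le_floor_iff)
    also have "\<dots> = (m \<le> n)" using x0 by (simp add: n_def le_nat_iff)
    finally show "(real m * g \<le> real M * a) = (m \<le> n)" .
  qed
  have "real n \<le> real M" using nx xM by linarith
  then have nM: "n \<le> M" by simp
  have "{m \<in> {1..M}. real m * g \<le> real M * a} = {1..n}"
  proof (intro set_eqI iffI)
    fix m assume "m \<in> {m \<in> {1..M}. real m * g \<le> real M * a}"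
    then show "m \<in> {1..n}" using key[of m] by simp
  next
    fix m assume "m \<in> {1..n}"
    then show "m \<in> {m \<in> {1..M}. real m * g \<le> real M * a}" using key[of m] nM by simp
  qed
  then have c: "cnt M g a = n" by (simp add: cnt_def)
  have "real n * g \<le> real M * a" using nx(1) gp by (simp add: x_def pos_le_divide_eq)
  then have l: "g * real n / real M \<le> a" using Mp by (simp add: pos_divide_le_eq mult.commute)
  have "real M * a < (real n + 1) * g" using nx(2) gp by (simp add: x_def pos_divide_less_eq)
  then have r: "a < g * (real n + 1) / real M" using Mp by (simp add: pos_less_divide_eq mult.commute)
  have e: "g * (real n + 1) / real M = g * real n / real M + g / real M" by (simp add: distrib_left add_divide_distrib)
  show ?thesis using l r e c by (simp add: abs_le_iff)
qed




theorem corollary5p8: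
  fixes N \<nu> M :: nat
    and A :: "nat \<Rightarrow> nat \<Rightarrow> complex" and \<phi> :: "nat \<Rightarrow> nat \<Rightarrow> real"
    and S :: "nat \<Rightarrow> (nat \<times> nat) set"
    and d d' :: "nat \<Rightarrow> nat" and g :: "nat \<Rightarrow> real" and \<alpha> :: real
    and Pchi USP UG UA Comp UAd UGd USPd Pphi Pphid :: "qstate \<Rightarrow> qstate"
    and \<psi> :: "nat \<Rightarrow> complex"
  assumes N_pos: "N > 0" and nu_pos: "\<nu> > 0" and M_pos: "M > 0"
    and A_polar: "\<forall>i\<in>{1..N}. \<forall>j\<in>{1..N}.
                    A i j = complex_of_real (cmod (A i j)) * exp (\<i> * complex_of_real (\<phi> i j))"
    and S_sub: "\<forall>k\<in>{1..\<nu>}. S k \<subseteq> {1..N} \<times> {1..N}"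
    and S_disj: "\<forall>k\<in>{1..\<nu>}. \<forall>k'\<in>{1..\<nu>}. k \<noteq> k' \<longrightarrow> S k \<inter> S k' = {}"
    and S_union: "(\<Union>k\<in>{1..\<nu>}. S k) = {1..N} \<times> {1..N}"
    and d_pos: "\<forall>k\<in>{1..\<nu>}. d k > 0 \<and> d' k > 0"
    and d_col: "\<forall>k\<in>{1..\<nu>}. \<forall>j\<in>{1..N}. card {i. (i, j) \<in> S k} = d k"
    and d_row: "\<forall>k\<in>{1..\<nu>}. \<forall>i\<in>{1..N}. card {j. (i, j) \<in> S k} = d' k"
    and g_nonneg: "\<forall>k\<in>{1..\<nu>}. g k \<ge> 0"
    and g_bound: "\<forall>k\<in>{1..\<nu>}. \<forall>(i, j)\<in>S k. cmod (A i j) \<le> g k"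
    and alpha_def: "\<alpha> = (\<Sum>k=1..\<nu>. sqrt (real (d k * d' k)) * g k)"
    and alpha_pos: "\<alpha> > 0"
    \<comment> \<open>PREP_chi\<close>
    and Pchi_unitary: "unitary_op Pchi" and Pchi_ctrl: "acts_on_K_R1 Pchi"
    and Pchi_spec: "\<forall>c. regK c = 0 \<longrightarrow> regR1 c = 0 \<longrightarrow> regR2 c \<in> {1..N} \<longrightarrow>
        Pchi (ket c) = (\<lambda>x. \<Sum>k\<in>{1..\<nu>}. \<Sum>i\<in>{i. (i, regR2 c) \<in> S k}.
           complex_of_real ((real (d' k) / real (d k)) powr (1/4) * sqrt (g k) / sqrt \<alpha>)
           * ket (c\<lparr>regK := k, regR1 := i\<rparr>) x)"
    \<comment> \<open>PREP_phi (with adjoint Pphid)\<close>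
    and Pphi_unitary: "unitary_pair Pphi Pphid" and Pphi_ctrl: "acts_on_K_R1 Pphi"
    and Pphi_spec: "\<forall>c. regK c = 0 \<longrightarrow> regR1 c = 0 \<longrightarrow> regR2 c \<in> {1..N} \<longrightarrow>
        Pphi (ket c) = (\<lambda>x. \<Sum>k\<in>{1..\<nu>}. \<Sum>j\<in>{j. (regR2 c, j) \<in> S k}.
           complex_of_real ((real (d k) / real (d' k)) powr (1/4) * sqrt (g k) / sqrt \<alpha>)
           * ket (c\<lparr>regK := k, regR1 := j\<rparr>) x)"
    \<comment> \<open>USP_M (with adjoint USPd)\<close>
    and USP_unitary: "unitary_pair USP USPd"
    and USP_spec: "\<forall>c. regSm c = 0 \<longrightarrow>
        USP (ket c) = (\<lambda>x. \<Sum>m=1..M. ket (c\<lparr>regSm := m\<rparr>) x / complex_of_real (sqrt (real M)))"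
    \<comment> \<open>U_A (with adjoint UAd)\<close>
    and UA_unitary: "unitary_pair UA UAd"
    and UA_spec: "\<forall>c. regVA c = 0 \<longrightarrow> regR1 c \<in> {1..N} \<longrightarrow> regR2 c \<in> {1..N} \<longrightarrow>
        UA (ket c) = ket (c\<lparr>regVA := cmod (A (regR1 c) (regR2 c))\<rparr>)"
    \<comment> \<open>U_G (with adjoint UGd)\<close>
    and UG_unitary: "unitary_pair UG UGd"
    and UG_spec: "\<forall>c. regVG c = 0 \<longrightarrow> regK c \<in> {1..\<nu>} \<longrightarrow>
        UG (ket c) = ket (c\<lparr>regVG := g (regK c)\<rparr>)"
    \<comment> \<open>Comp\<close>
    and Comp_unitary: "unitary_op Comp"
    and Comp_spec: "\<forall>c. regF c = False \<longrightarrow>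
        Comp (ket c) = ket (c\<lparr>regF := \<not> (real M * regVA c \<ge> regVG c * real (regSm c))\<rparr>)"
    \<comment> \<open>the input |Psi> = sum_{j=1..N} psi_j |j>\<close>
    and psi_supp: "\<forall>j. j \<notin> {1..N} \<longrightarrow> \<psi> j = 0"
  shows "(\<forall>i. (Pphid (USPd (SWAP (UGd (UAd (PHASE \<phi> (Comp (UA (UG (USP (Pchi
              (input_state \<psi>)))))))))))) (anc0 i)
            = (if i \<in> {1..N}
               then (\<Sum>j=1..N. Atilde \<nu> S g A \<phi> M i j * \<psi> j) / complex_of_real \<alpha>
               else 0))
       \<and> (\<forall>i\<in>{1..N}. \<forall>j\<in>{1..N}.
            cmod (Atilde \<nu> S g A \<phi> M i j - A i j) \<le> g (kidx S \<nu> i j) / real M)"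
  proof -
  obtain PchiD where PchiU: "unitary_pair Pchi PchiD" using Pchi_unitary unfolding unitary_op_def by blast
  obtain CompD where CompU: "unitary_pair Comp CompD" using Comp_unitary unfolding unitary_op_def by blast
  have Sr: "\<And>k i j. k \<in> {1..\<nu>} \<Longrightarrow> (i, j) \<in> S k \<Longrightarrow> i \<in> {1..N} \<and> j \<in> {1..N}"
    using S_sub by blast
  have kidx_eq: "\<And>k i j. k \<in> {1..\<nu>} \<Longrightarrow> (i, j) \<in> S k \<Longrightarrow> kidx S \<nu> i j = k"
  proof -
    fix k i j assume k: "k \<in> {1..\<nu>}" and ij: "(i, j) \<in> S k"
    show "kidx S \<nu> i j = k" unfolding kidx_def
    proof (rule the_equality)
      show "k \<in> {1..\<nu>} \<and> (i, j) \<in> S k" using k ij by simp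
    next
      fix k' assume "k' \<in> {1..\<nu>} \<and> (i, j) \<in> S k'"
      then show "k' = k" using S_disj k ij by blast
    qed
  qed
  have kidx_ex: "\<And>i j. i \<in> {1..N} \<Longrightarrow> j \<in> {1..N} \<Longrightarrow>
      kidx S \<nu> i j \<in> {1..\<nu>} \<and> (i, j) \<in> S (kidx S \<nu> i j)"
  proof -
    fix i j assume "i \<in> {1..N}" "j \<in> {1..N}"
    then have "(i, j) \<in> (\<Union>k\<in>{1..\<nu>}. S k)" using S_union by simp
    then obtain k where "k \<in> {1..\<nu>}" "(i, j) \<in> S k" by blast
    then show "kidx S \<nu> i j \<in> {1..\<nu>} \<and> (i, j) \<in> S (kidx S \<nu> i j)" using kidx_eq by simp
  qed
  have finL: "finite {i. (i, j) \<in> S k}" if k: "k \<in> {1..\<nu>}" for k j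
  proof (rule finite_subset[of _ "{1..N}"])
    show "{i. (i, j) \<in> S k} \<subseteq> {1..N}" using Sr[OF k] by blast
  qed simp
  have finR: "finite {j. (i, j) \<in> S k}" if k: "k \<in> {1..\<nu>}" for k i
  proof (rule finite_subset[of _ "{1..N}"])
    show "{j. (i, j) \<in> S k} \<subseteq> {1..N}" using Sr[OF k] by blast
  qed simp
  define a where "a k = complex_of_real ((real (d' k) / real (d k)) powr (1/4) * sqrt (g k) / sqrt \<alpha>)" for k
  define b where "b k = complex_of_real ((real (d k) / real (d' k)) powr (1/4) * sqrt (g k) / sqrt \<alpha>)" for k
  define sM where "sM = complex_of_real (sqrt (real M))"
  define J1 where "J1 j = Sigma {1..\<nu>} (\<lambda>k. {i. (i, j) \<in> S k})" for j
  define I1 where "I1 = Sigma {1..N} J1"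
  define I2 where "I2 = I1 \<times> {1..M}"
  have finJ1: "\<forall>j. finite (J1 j)" unfolding J1_def using finL by (auto intro!: finite_SigmaI)
  have finI1: "finite I1" unfolding I1_def using finJ1 by (auto intro!: finite_SigmaI)
  have finI2: "finite I2" unfolding I2_def using finI1 by simp
  have memI2: "\<And>j k i m. ((j, k, i), m) \<in> I2 \<longleftrightarrow> j \<in> {1..N} \<and> k \<in> {1..\<nu>} \<and> (i, j) \<in> S k \<and> m \<in> {1..M}"
    by (auto simp: I2_def I1_def J1_def)
  have memI1: "\<And>j k i. (j, k, i) \<in> I1 \<longleftrightarrow> j \<in> {1..N} \<and> k \<in> {1..\<nu>} \<and> (i, j) \<in> S k"
    by (auto simp: I1_def J1_def)

  have S0: "input_state \<psi> = comb {1..N} \<psi> anc0"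
  proof (rule ext)
    fix x
    have inj0: "inj_on anc0 {1..N}" by (auto simp: inj_on_def anc0_cf)
    show "input_state \<psi> x = comb {1..N} \<psi> anc0 x"
    proof (cases "\<exists>j. x = anc0 j")
      case True
      then obtain j where x: "x = anc0 j" by blast
      show ?thesis
      proof (cases "j \<in> {1..N}")
        case True
        then show ?thesis using comb_at[OF _ inj0 True, of \<psi>] x
          by (auto simp: input_state_def anc0_cf)
      next
        case False
        then have "\<forall>t\<in>{1..N}. anc0 t \<noteq> x" using x by (auto simp: anc0_cf)
        then show ?thesis using psi_supp x False comb_out[of "{1..N}" anc0 x \<psi>]
          by (auto simp: input_state_def anc0_cf)
      qed
    next
      case False
      then have "\<forall>t\<in>{1..N}. anc0 t \<noteq> x" by auto
      then show ?thesis using False comb_out[of "{1..N}" anc0 x \<psi>]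
        by (auto simp: input_state_def)
    qed
  qed

  define c1 where "c1 = (\<lambda>(j::nat, k::nat, i::nat). cf False 0 0 0 k i j)"
  define f1 where "f1 = (\<lambda>(j::nat, k::nat, i::nat). \<psi> j * a k)"
  have S1: "Pchi (comb {1..N} \<psi> anc0) = comb I1 f1 c1"
  proof -
    have "\<forall>j\<in>{1..N}. Pchi (ket (anc0 j)) = comb (J1 j) (\<lambda>(k, i). a k) (\<lambda>(k, i). cf False 0 0 0 k i j)"
    proof
      fix j :: nat assume j: "j \<in> {1..N}"
      have "Pchi (ket (anc0 j)) = (\<lambda>x. \<Sum>k\<in>{1..\<nu>}. \<Sum>i\<in>{i. (i, j) \<in> S k}. a k * ket (cf False 0 0 0 k i j) x)"
        using Pchi_spec j by (simp add: anc0_cf a_def)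
      also have "\<dots> = comb (J1 j) (\<lambda>(k, i). a k) (\<lambda>(k, i). cf False 0 0 0 k i j)"
        unfolding J1_def by (rule sum2_comb) (use finL in auto)
      finally show "Pchi (ket (anc0 j)) = comb (J1 j) (\<lambda>(k, i). a k) (\<lambda>(k, i). cf False 0 0 0 k i j)" .
    qed
    then have "Pchi (comb {1..N} \<psi> anc0) = comb (Sigma {1..N} J1)
        (\<lambda>(t, s). \<psi> t * (\<lambda>(k, i). a k) s) (\<lambda>(t, s). (\<lambda>(k, i). cf False 0 0 0 k i t) s)"
      using finJ1 by (intro up_comb_comb[OF PchiU]) auto
    also have "\<dots> = comb I1 f1 c1"
      unfolding I1_def by (rule comb_cong) (auto simp: f1_def c1_def)
    finally show ?thesis .
  qed

  define c2 where "c2 = (\<lambda>((j::nat, k::nat, i::nat), m::nat). cf False m 0 0 k i j)"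
  define f2 where "f2 = (\<lambda>((j::nat, k::nat, i::nat), m::nat). \<psi> j * a k * (1 / sM))"
  have S2: "USP (comb I1 f1 c1) = comb I2 f2 c2"
  proof -
    have "\<forall>t\<in>I1. USP (ket (c1 t)) = comb {1..M} (\<lambda>m. 1 / sM) (\<lambda>m. c2 (t, m))"
    proof
      fix t assume "t \<in> I1"
      obtain j k i where t: "t = (j, k, i)" by (cases t) auto
      have "USP (ket (c1 t)) = (\<lambda>x. \<Sum>m=1..M. ket (c2 (t, m)) x / sM)"
        using USP_spec t by (simp add: c1_def c2_def sM_def)
      also have "\<dots> = comb {1..M} (\<lambda>m. 1 / sM) (\<lambda>m. c2 (t, m))" by (rule sum1_comb)
      finally show "USP (ket (c1 t)) = comb {1..M} (\<lambda>m. 1 / sM) (\<lambda>m. c2 (t, m))" .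
    qed
    then have "USP (comb I1 f1 c1) = comb (Sigma I1 (\<lambda>_. {1..M}))
        (\<lambda>(t, s). f1 t * (\<lambda>_ m. 1 / sM) t s) (\<lambda>(t, s). (\<lambda>t m. c2 (t, m)) t s)"
      using finI1 by (intro up_comb_comb[OF USP_unitary]) auto
    also have "\<dots> = comb I2 f2 c2"
      unfolding I2_def by (rule comb_cong) (auto simp: f1_def f2_def)
    finally show ?thesis .
  qed

  define c3 where "c3 = (\<lambda>((j::nat, k::nat, i::nat), m::nat). cf False m 0 (g k) k i j)"
  define c4 where "c4 = (\<lambda>((j::nat, k::nat, i::nat), m::nat). cf False m (cmod (A i j)) (g k) k i j)"
  define fl where "fl = (\<lambda>((j::nat, k::nat, i::nat), m::nat). \<not> (real M * cmod (A i j) \<ge> g k * real m))"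
  define c5 where "c5 = (\<lambda>t. case t of ((j::nat, k::nat, i::nat), m::nat) \<Rightarrow> cf (fl t) m (cmod (A i j)) (g k) k i j)"
  have S3: "UG (comb I2 f2 c2) = comb I2 f2 c3"
  proof (rule up_comb_ket[OF UG_unitary finI2], rule ballI)
    fix t assume "t \<in> I2"
    then obtain j k i m where t: "t = ((j, k, i), m)" and "k \<in> {1..\<nu>}" by (cases t) (auto simp: memI2)
    then show "UG (ket (c2 t)) = ket (c3 t)" using UG_spec by (simp add: c2_def c3_def)
  qed
  have S4: "UA (comb I2 f2 c3) = comb I2 f2 c4"
  proof (rule up_comb_ket[OF UA_unitary finI2], rule ballI)
    fix t assume "t \<in> I2"
    then obtain j k i m where t: "t = ((j, k, i), m)" and kk: "k \<in> {1..\<nu>}" and ss: "(i, j) \<in> S k" by (cases t) (auto simp: memI2)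
    have "i \<in> {1..N}" "j \<in> {1..N}" using Sr[OF kk ss] by simp_all
    then show "UA (ket (c3 t)) = ket (c4 t)" using UA_spec t by (simp add: c3_def c4_def)
  qed
  have S5: "Comp (comb I2 f2 c4) = comb I2 f2 c5"
  proof (rule up_comb_ket[OF CompU finI2], rule ballI)
    fix t assume "t \<in> I2"
    then obtain j k i m where t: "t = ((j, k, i), m)" by (cases t) auto
    then show "Comp (ket (c4 t)) = ket (c5 t)" using Comp_spec by (simp add: c4_def c5_def fl_def)
  qed
  define f6 where "f6 = (\<lambda>t. case t of ((j::nat, k::nat, i::nat), m::nat) \<Rightarrow> exp (\<i> * complex_of_real (\<phi> i j)) * f2 t)"
  have S6: "PHASE \<phi> (comb I2 f2 c5) = comb I2 f6 c5"
    unfolding phase_comb by (rule comb_cong) (auto simp: f6_def c5_def split: prod.splits)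
  define cY where "cY = (\<lambda>t. case t of ((j::nat, k::nat, i::nat), m::nat) \<Rightarrow> cf (fl t) m 0 0 k i j)"
  define Y where "Y = comb I2 f6 cY"
  have fY: "fsupp Y" unfolding Y_def using finI2 by (rule fsupp_comb)
  have UY: "UA (UG Y) = comb I2 f6 c5"
  proof -
    have UGY: "UG Y = comb I2 f6 (\<lambda>t. case t of ((j, k, i), m) \<Rightarrow> cf (fl t) m 0 (g k) k i j)"
      unfolding Y_def
    proof (rule up_comb_ket[OF UG_unitary finI2], rule ballI)
      fix t assume "t \<in> I2"
      then obtain j k i m where t: "t = ((j, k, i), m)" and "k \<in> {1..\<nu>}" by (cases t) (auto simp: memI2)
      then show "UG (ket (cY t)) = ket (case t of ((j, k, i), m) \<Rightarrow> cf (fl t) m 0 (g k) k i j)"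
        using UG_spec by (simp add: cY_def)
    qed
    have UA2: "UA (comb I2 f6 (\<lambda>t. case t of ((j, k, i), m) \<Rightarrow> cf (fl t) m 0 (g k) k i j)) = comb I2 f6 c5"
    proof (rule up_comb_ket[OF UA_unitary finI2], rule ballI)
      fix t assume "t \<in> I2"
      then obtain j k i m where t: "t = ((j, k, i), m)" and kk: "k \<in> {1..\<nu>}" and ss: "(i, j) \<in> S k" by (cases t) (auto simp: memI2)
      have "i \<in> {1..N}" "j \<in> {1..N}" using Sr[OF kk ss] by simp_all
      then show "UA (ket (case t of ((j, k, i), m) \<Rightarrow> cf (fl t) m 0 (g k) k i j)) = ket (c5 t)"
        using UA_spec t by (simp add: c5_def)
    qed
    show ?thesis using UGY UA2 by simp
  qed
  have Yeq: "UGd (UAd (PHASE \<phi> (Comp (UA (UG (USP (Pchi (input_state \<psi>)))))))) = Y"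
  proof -
    have "PHASE \<phi> (Comp (UA (UG (USP (Pchi (input_state \<psi>)))))) = UA (UG Y)"
      using S0 S1 S2 S3 S4 S5 S6 UY by simp
    moreover have "UAd (UA (UG Y)) = UG Y" by (rule up_fs(3)[OF UA_unitary up_fs(1)[OF UG_unitary fY]])
    moreover have "UGd (UG Y) = Y" by (rule up_fs(3)[OF UG_unitary fY])
    ultimately show ?thesis by simp
  qed

  define W where "W = SWAP Y"
  have fW: "fsupp W" unfolding W_def Y_def swap_comb using finI2 by (rule fsupp_comb)
  define u where "u = USPd W"
  have fu: "fsupp u" unfolding u_def by (rule up_fs(2)[OF USP_unitary fW])
  have Weval: "\<And>z. W z = Y (swapc z)" by (simp add: W_def SWAP_def swapc_def)
  have cnjsM: "cnj (1 / sM) = 1 / sM" by (simp add: sM_def)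
  have ueval: "u x = (\<Sum>m=1..M. (1 / sM) * Y (swapc (x\<lparr>regSm := m\<rparr>)))" if x0: "regSm x = 0" for x
  proof -
    have inj: "inj_on (\<lambda>m. x\<lparr>regSm := m\<rparr>) {1..M}"
    proof (rule inj_onI)
      fix m m' assume "x\<lparr>regSm := m\<rparr> = x\<lparr>regSm := m'\<rparr>"
      then have "regSm (x\<lparr>regSm := m\<rparr>) = regSm (x\<lparr>regSm := m'\<rparr>)" by simp
      then show "m = m'" by simp
    qed
    have "u x = braket (USP (ket x)) W" unfolding u_def by (rule adj_eval[OF USP_unitary fW])
    moreover have "USP (ket x) = (\<lambda>y. \<Sum>m=1..M. ket (x\<lparr>regSm := m\<rparr>) y / complex_of_real (sqrt (real M)))"
      using USP_spec x0 by simp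
    moreover have "(\<lambda>y. \<Sum>m=1..M. ket (x\<lparr>regSm := m\<rparr>) y / complex_of_real (sqrt (real M)))
        = comb {1..M} (\<lambda>m. 1 / sM) (\<lambda>m. x\<lparr>regSm := m\<rparr>)"
      unfolding sM_def by (rule sum1_comb)
    moreover have "braket (comb {1..M} (\<lambda>m. 1 / sM) (\<lambda>m. x\<lparr>regSm := m\<rparr>)) W
        = (\<Sum>m=1..M. cnj (1 / sM) * W (x\<lparr>regSm := m\<rparr>))"
      by (rule braket_comb[OF _ inj]) simp
    ultimately show ?thesis using Weval cnjsM by simp
  qed
  have injcY: "inj_on cY I2"
  proof (rule inj_onI)
    fix t t' assume "t \<in> I2" "t' \<in> I2" "cY t = cY t'"
    moreover obtain j k i m where "t = ((j, k, i), m)" by (cases t) auto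
    moreover obtain j' k' i' m' where "t' = ((j', k', i'), m')" by (cases t') auto
    ultimately show "t = t'" by (simp add: cY_def)
  qed
  have Yval: "Y (cf False m 0 0 k i j) = (if ((j, k, i), m) \<in> I2 \<and> real m * g k \<le> real M * cmod (A i j)
      then f6 ((j, k, i), m) else 0)" for j k i m
  proof (cases "((j, k, i), m) \<in> I2 \<and> real m * g k \<le> real M * cmod (A i j)")
    case True
    then have "cY ((j, k, i), m) = cf False m 0 0 k i j" by (simp add: cY_def fl_def mult.commute)
    then show ?thesis using comb_at[OF finI2 injcY, of "((j, k, i), m)" f6] True unfolding Y_def by simp
  next
    case False
    have "\<forall>t\<in>I2. cY t \<noteq> cf False m 0 0 k i j"
    proof
      fix t assume t: "t \<in> I2"
      obtain j' k' i' m' where tt: "t = ((j', k', i'), m')" by (cases t) auto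
      show "cY t \<noteq> cf False m 0 0 k i j" using False t tt by (auto simp: cY_def fl_def mult.commute)
    qed
    then have "Y (cf False m 0 0 k i j) = 0" using comb_out[of I2 cY _ f6] unfolding Y_def by simp
    then show ?thesis by (simp only: if_not_P[OF False])
  qed
  have Yzero: "Y z = 0" if z: "regR1 z \<notin> {1..N}" for z
  proof -
    have "\<forall>t\<in>I2. cY t \<noteq> z"
    proof
      fix t assume t: "t \<in> I2"
      obtain j k i m where tt: "t = ((j, k, i), m)" by (cases t) auto
      have kk: "k \<in> {1..\<nu>}" and ss: "(i, j) \<in> S k" using t tt memI2 by auto
      have "i \<in> {1..N}" using Sr[OF kk ss] by simp
      then show "cY t \<noteq> z" using z tt by (auto simp: cY_def)
    qed
    then show ?thesis using comb_out[of I2 cY z f6] unfolding Y_def by simp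
  qed

  have sM0: "sM \<noteq> 0" using M_pos by (simp add: sM_def)
  have sMsq: "sM * sM = complex_of_real (real M)" unfolding sM_def
    by (simp only: of_real_mult[symmetric] real_sqrt_mult_self) simp
  have ab: "b k * a k = complex_of_real (g k / \<alpha>)" if k: "k \<in> {1..\<nu>}" for k
  proof -
    have dp: "real (d k) > 0" "real (d' k) > 0" using d_pos k by auto
    have "(real (d k) / real (d' k)) powr (1/4) * (real (d' k) / real (d k)) powr (1/4)
        = (real (d k) / real (d' k) * (real (d' k) / real (d k))) powr (1/4)"
      by (rule powr_mult[symmetric])
    also have "real (d k) / real (d' k) * (real (d' k) / real (d k)) = 1" using dp by simp
    also have "(1::real) powr (1/4) = 1" by simp
    finally have p: "(real (d k) / real (d' k)) powr (1/4) * (real (d' k) / real (d k)) powr (1/4) = 1" .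
    have g0: "g k \<ge> 0" using g_nonneg k by simp
    have "(real (d k) / real (d' k)) powr (1/4) * sqrt (g k) / sqrt \<alpha> *
          ((real (d' k) / real (d k)) powr (1/4) * sqrt (g k) / sqrt \<alpha>)
        = ((real (d k) / real (d' k)) powr (1/4) * (real (d' k) / real (d k)) powr (1/4))
          * (sqrt (g k) * sqrt (g k)) / (sqrt \<alpha> * sqrt \<alpha>)"
      by (simp add: field_simps)
    also have "\<dots> = g k / \<alpha>" using p g0 alpha_pos by simp
    finally show ?thesis unfolding a_def b_def by (simp only: of_real_mult[symmetric])
  qed
  have part1: "Pphid u (anc0 i) = (if i \<in> {1..N}
               then (\<Sum>j=1..N. Atilde \<nu> S g A \<phi> M i j * \<psi> j) / complex_of_real \<alpha> else 0)" for i
  proof -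
    have br: "Pphid u (anc0 i) = braket (Pphi (ket (anc0 i))) u" by (rule adj_eval[OF Pphi_unitary fu])
    show ?thesis
    proof (cases "i \<in> {1..N}")
      case False
      have "braket (Pphi (ket (anc0 i))) u = 0" unfolding braket_def
      proof (rule sum.neutral, rule ballI)
        fix x assume "x \<in> {x. Pphi (ket (anc0 i)) x \<noteq> 0}"
        then have "x = (anc0 i)\<lparr>regK := regK x, regR1 := regR1 x\<rparr>"
          using Pphi_ctrl unfolding acts_on_K_R1_def by blast
        then have xe: "x = cf False 0 0 0 (regK x) (regR1 x) i" by (simp add: anc0_cf)
        have "u x = (\<Sum>m=1..M. (1 / sM) * Y (swapc (x\<lparr>regSm := m\<rparr>)))"
          by (rule ueval) (subst xe, simp)
        also have "\<dots> = 0"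
        proof (rule sum.neutral, rule ballI)
          fix m assume "m \<in> {1..M}"
          have "Y (swapc (x\<lparr>regSm := m\<rparr>)) = 0"
            by (rule Yzero) (subst xe, use False in simp)
          then show "1 / sM * Y (swapc (x\<lparr>regSm := m\<rparr>)) = 0" by simp
        qed
        finally show "cnj (Pphi (ket (anc0 i)) x) * u x = 0" by simp
      qed
      then show ?thesis using br by (simp only: if_not_P[OF False])
    next
      case True
      define Ji where "Ji = Sigma {1..\<nu>} (\<lambda>k. {j. (i, j) \<in> S k})"
      have finJi: "finite Ji" unfolding Ji_def using finR by (auto intro!: finite_SigmaI)
      have injJi: "inj_on (\<lambda>(k, j). cf False 0 0 0 k j i) Ji" by (rule inj_onI) auto
      have "Pphi (ket (anc0 i)) = (\<lambda>x. \<Sum>k\<in>{1..\<nu>}. \<Sum>j\<in>{j. (i, j) \<in> S k}. b k * ket (cf False 0 0 0 k j i) x)"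
        using Pphi_spec True by (simp add: anc0_cf b_def)
      also have "\<dots> = comb Ji (\<lambda>(k, j). b k) (\<lambda>(k, j). cf False 0 0 0 k j i)"
        unfolding Ji_def by (rule sum2_comb) (use finR in auto)
      finally have Pi: "Pphi (ket (anc0 i)) = comb Ji (\<lambda>(k, j). b k) (\<lambda>(k, j). cf False 0 0 0 k j i)" .
      define G where "G = (\<lambda>k j. b k * (of_nat (cnt M (g k) (cmod (A i j))) *
                 (1 / sM * (exp (\<i> * complex_of_real (\<phi> i j)) * (\<psi> j * a k * (1 / sM))))))"
      have "braket (Pphi (ket (anc0 i))) u = (\<Sum>p\<in>Ji. cnj ((\<lambda>(k, j). b k) p) * u ((\<lambda>(k, j). cf False 0 0 0 k j i) p))"
        unfolding Pi by (rule braket_comb[OF finJi injJi])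
      also have "\<dots> = (\<Sum>p\<in>Ji. G (fst p) (snd p))"
      proof (rule sum.cong[OF refl])
        fix p assume p: "p \<in> Ji"
        obtain k j where pe: "p = (k, j)" by (cases p) auto
        have kk: "k \<in> {1..\<nu>}" and ss: "(i, j) \<in> S k" using p pe by (auto simp: Ji_def)
        have jN: "j \<in> {1..N}" using Sr[OF kk ss] by simp
        have "u (cf False 0 0 0 k j i) = (\<Sum>m=1..M. (1 / sM) * Y (cf False m 0 0 k i j))"
          by (subst ueval) simp_all
        also have "\<dots> = (\<Sum>m=1..M. if real m * g k \<le> real M * cmod (A i j)
              then 1 / sM * (exp (\<i> * complex_of_real (\<phi> i j)) * (\<psi> j * a k * (1 / sM))) else 0)"
        proof (rule sum.cong[OF refl])
          fix m assume "m \<in> {1..M}"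
          then have mem: "((j, k, i), m) \<in> I2" using memI2 kk ss jN by blast
          show "1 / sM * Y (cf False m 0 0 k i j) = (if real m * g k \<le> real M * cmod (A i j)
              then 1 / sM * (exp (\<i> * complex_of_real (\<phi> i j)) * (\<psi> j * a k * (1 / sM))) else 0)"
            by (simp add: Yval mem f6_def f2_def)
        qed
        also have "\<dots> = of_nat (cnt M (g k) (cmod (A i j))) *
              (1 / sM * (exp (\<i> * complex_of_real (\<phi> i j)) * (\<psi> j * a k * (1 / sM))))"
          by (simp add: sum_if_card cnt_def)
        finally have "u (cf False 0 0 0 k j i) = \<dots>" .
        moreover have "cnj (b k) = b k" by (simp add: b_def)
        ultimately show "cnj ((\<lambda>(k, j). b k) p) * u ((\<lambda>(k, j). cf False 0 0 0 k j i) p) = G (fst p) (snd p)"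
          by (simp add: pe G_def)
      qed
      also have "\<dots> = (\<Sum>j=1..N. G (kidx S \<nu> i j) j)"
      proof -
        have bij: "bij_betw (\<lambda>j. (kidx S \<nu> i j, j)) {1..N} Ji"
        proof (rule bij_betw_imageI)
          show "inj_on (\<lambda>j. (kidx S \<nu> i j, j)) {1..N}" by (rule inj_onI) simp
          show "(\<lambda>j. (kidx S \<nu> i j, j)) ` {1..N} = Ji"
          proof (rule set_eqI, rule iffI)
            fix p assume "p \<in> (\<lambda>j. (kidx S \<nu> i j, j)) ` {1..N}"
            then obtain j where "j \<in> {1..N}" "p = (kidx S \<nu> i j, j)" by blast
            then show "p \<in> Ji" using kidx_ex[OF True] by (simp add: Ji_def)
          next
            fix p assume p: "p \<in> Ji"
            obtain k j where pe: "p = (k, j)" by (cases p) auto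
            have kk: "k \<in> {1..\<nu>}" and ss: "(i, j) \<in> S k" using p pe by (auto simp: Ji_def)
            have jN: "j \<in> {1..N}" using Sr[OF kk ss] by simp
            have "kidx S \<nu> i j = k" by (rule kidx_eq[OF kk ss])
            then show "p \<in> (\<lambda>j. (kidx S \<nu> i j, j)) ` {1..N}" using pe jN by force
          qed
        qed
        have "(\<Sum>p\<in>Ji. G (fst p) (snd p)) = (\<Sum>j\<in>{1..N}. (\<lambda>p. G (fst p) (snd p)) (kidx S \<nu> i j, j))"
          by (rule sum.reindex_bij_betw[symmetric, OF bij])
        then show ?thesis by simp
      qed
      also have "\<dots> = (\<Sum>j=1..N. Atilde \<nu> S g A \<phi> M i j * \<psi> j / complex_of_real \<alpha>)"
      proof (rule sum.cong[OF refl])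
        fix j assume jN: "j \<in> {1..N}"
        define k where "k = kidx S \<nu> i j"
        have kk: "k \<in> {1..\<nu>}" using kidx_ex[OF True jN] by (simp add: k_def)
        define c where "c = cnt M (g k) (cmod (A i j))"
        define E where "E = exp (\<i> * complex_of_real (\<phi> i j))"
        have "G k j = (b k * a k) / (sM * sM) * of_nat c * E * \<psi> j"
          by (simp add: G_def c_def E_def field_simps)
        also have "\<dots> = complex_of_real (g k / \<alpha>) / complex_of_real (real M) * of_nat c * E * \<psi> j"
          by (simp only: ab[OF kk] sMsq)
        also have "\<dots> = Atilde \<nu> S g A \<phi> M i j * \<psi> j / complex_of_real \<alpha>"
          using alpha_pos M_pos by (simp add: Atilde_def k_def[symmetric] c_def[symmetric] E_def[symmetric] field_simps)
        finally show "G (kidx S \<nu> i j) j = Atilde \<nu> S g A \<phi> M i j * \<psi> j / complex_of_real \<alpha>"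
          by (simp add: k_def)
      qed
      also have "\<dots> = (\<Sum>j=1..N. Atilde \<nu> S g A \<phi> M i j * \<psi> j) / complex_of_real \<alpha>"
        by (simp add: sum_divide_distrib)
      finally show ?thesis using br True by simp
    qed
  qed
  have part2: "cmod (Atilde \<nu> S g A \<phi> M i j - A i j) \<le> g (kidx S \<nu> i j) / real M"
    if iN: "i \<in> {1..N}" and jN: "j \<in> {1..N}" for i j
  proof -
    define k where "k = kidx S \<nu> i j"
    have kk: "k \<in> {1..\<nu>}" and ss: "(i, j) \<in> S k" using kidx_ex[OF iN jN] by (simp_all add: k_def)
    have g0: "0 \<le> g k" using g_nonneg kk by simp
    have ag: "cmod (A i j) \<le> g k" using g_bound kk ss by blast
    define E where "E = exp (\<i> * complex_of_real (\<phi> i j))"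
    define ca where "ca = cmod (A i j)"
    define r where "r = g k * real (cnt M (g k) ca) / real M"
    have Ap: "A i j = complex_of_real ca * E" using A_polar iN jN unfolding E_def ca_def by blast
    have "Atilde \<nu> S g A \<phi> M i j = E * complex_of_real r"
      by (simp add: Atilde_def k_def[symmetric] E_def[symmetric] ca_def[symmetric] r_def)
    then have "Atilde \<nu> S g A \<phi> M i j - A i j = E * complex_of_real (r - ca)"
      by (subst Ap) (simp add: algebra_simps)
    then have "cmod (Atilde \<nu> S g A \<phi> M i j - A i j) = \<bar>r - ca\<bar>"
      by (simp add: norm_mult E_def of_real_diff[symmetric] del: of_real_diff)
    also have "\<dots> \<le> g k / real M" unfolding r_def ca_def by (rule cnt_bound[OF M_pos norm_ge_zero ag])
    finally show ?thesis by (simp add: k_def)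
  qed
  show ?thesis
    using part1 part2 Yeq unfolding u_def W_def by simp
qed


end
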